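(* Suppose Assumption A holds and $F$ is $K$-convex. Let $\{x^k\}$ be an infinite sequence generated by Algorithm 1 with $G_k\in\mathcal{S}_{\ell,\mu}(F,x^k)$ for all $k$, where $\ell\preceq_K\mu$. Then: (i) $\{x^k\}$ converges to a weakly efficient solution $x^*$ of $\min_K F(x)$; (ii) $u_0(x^k)\le\frac{\ell_{\max}R^2}{2k}$ for all $k\ge1$, where $\ell_{\max}:=\max_{c^*\in C}\langle c^*,\ell\rangle$, $R:=\sup\{\|x-y\|:x,y\in\mathcal{L}_F(x^0)\}$, and $u_0(x):=\max_{z\in\mathbb{R}^n}\min_{c^*\in C}\langle c^*,F(x)-F(z)\rangle$.
   Context: $K\subset\mathbb{R}^m$ is a closed, convex, pointed cone with nonempty interior; $y\preceq_K y'$ iff $y'-y\in K$, $y\prec_K y'$ iff $y'-y\in\mathrm{int}(K)$. $K^*=\{c:\langle c,y\rangle\ge0\ \forall y\in K\}$; $C$ is a compact convex set with $0\notin C$, $\mathrm{cone}(C)=K^*$. $F:\mathbb{R}^n\to\mathbb{R}^m$ differentiable with Jacobian $JF$. $K$-convex: $JF(x)(y-x)\preceq_K F(y)-F(x)$ for all $x,y$. $x^*$ is weakly efficient if there is no $x$ with $F(x)\prec_K F(x^* )$; $K$-stationary if $\mathrm{range}(JF(x^* ))\cap(-\mathrm{int}(K))=\emptyset$. For differentiable $\Phi$: strongly $K$-convex with $\mu\in K$ means $J\Phi(x)(y-x)+\tfrac12\|y-x\|^2\mu\preceq_K\Phi(y)-\Phi(x)$ $\forall x,y$; $K$-smooth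 with $\ell\in K$ means $\Phi(y)-\Phi(x)\preceq_K J\Phi(x)(y-x)+\tfrac12\|y-x\|^2\ell$ $\forall x,y$. Surrogate class $\mathcal{S}_{\ell,\mu}(F,x^k)$ ($\ell\in K,\mu\in\mathrm{int}(K)$): differentiable $G_k$ strongly $K$-convex with $\mu$ such that, with $x^{k+1}$ the minimizer of $x\mapsto\max_{c^*\in C}\langle c^*,G_k(x)\rangle$ and $H_k:=G_k-F+F(x^k)$: $F(x^{k+1})-F(x^k)\preceq_K G_k(x^{k+1})$; $H_k$ is $K$-smooth with $\ell$, $H_k(x^k)=0$, $JH_k(x^k)=0$. Algorithm 1: from $x^0$, choose $G_k\in\mathcal{S}_{\ell,\mu}(F,x^k)$, set $x^{k+1}:=\arg\min_x\max_{c^*\in C}\langle c^*,G_k(x)\rangle$, stop if $x^{k+1}=x^k$. Assumption A: (i) $\mathcal{L}_F(x^0)=\{x:F(x)\preceq_K F(x^0)\}$ is bounded; (ii) whenever $x^k\to x^*$ along an infinite index set $\mathcal{K}$, $G_k\in\mathcal{S}_{\ell,\mu}(F,x^k)$ and $\max_{c^*\in C}\langle c^*,G_k(x^{k+1})\rangle\to0$ along $\mathcal{K}$, $x^*$ is $K$-stationary. *)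

theory Defs
  imports "HOL-Analysis.Analysis"
begin

definition cle :: "'b::euclidean_space set \<Rightarrow> 'b \<Rightarrow> 'b \<Rightarrow> bool" where
  "cle K y y' \<longleftrightarrow> y' - y \<in> K"

definition clt :: "'b::euclidean_space set \<Rightarrow> 'b \<Rightarrow> 'b \<Rightarrow> bool" where
  "clt K y y' \<longleftrightarrow> y' - y \<in> interior K"

definition dual_cone :: "'b::euclidean_space set \<Rightarrow> 'b set" where
  "dual_cone K = {c. \<forall>y\<in>K. 0 \<le> c \<bullet> y}"

definition pointed_cone_ok :: "'b::euclidean_space set \<Rightarrow> bool" where
  "pointed_cone_ok K \<longleftrightarrow> closed K \<and> convex K \<and> cone K \<and> K \<inter> uminus ` K = {0}
     \<and> interior K \<noteq> {}"

definition scal_set_ok :: "'b::euclidean_space set \<Rightarrow> 'b set \<Rightarrow> bool" where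
  "scal_set_ok K C \<longleftrightarrow> compact C \<and> convex C \<and> 0 \<notin> C \<and> cone hull C = dual_cone K"

definition scal :: "'b::euclidean_space set \<Rightarrow> 'b \<Rightarrow> real" where
  "scal C v = (SUP c\<in>C. c \<bullet> v)"

abbreviation J :: "('a::euclidean_space \<Rightarrow> 'b::euclidean_space) \<Rightarrow> 'a \<Rightarrow> 'a \<Rightarrow> 'b" where
  "J F x \<equiv> frechet_derivative F (at x)"

definition K_convex :: "'b::euclidean_space set \<Rightarrow> ('a::euclidean_space \<Rightarrow> 'b) \<Rightarrow> bool" where
  "K_convex K F \<longleftrightarrow> (\<forall>x y. cle K (J F x (y - x)) (F y - F x))"

definition weakly_efficient :: "'b::euclidean_space set \<Rightarrow> ('a::euclidean_space \<Rightarrow> 'b) \<Rightarrow> 'a \<Rightarrow> bool" where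
  "weakly_efficient K F xs \<longleftrightarrow> \<not> (\<exists>x. clt K (F x) (F xs))"

definition K_stationary :: "'b::euclidean_space set \<Rightarrow> ('a::euclidean_space \<Rightarrow> 'b) \<Rightarrow> 'a \<Rightarrow> bool" where
  "K_stationary K F xs \<longleftrightarrow> range (J F xs) \<inter> uminus ` interior K = {}"

definition strongly_K_convex :: "'b::euclidean_space set \<Rightarrow> ('a::euclidean_space \<Rightarrow> 'b) \<Rightarrow> 'b \<Rightarrow> bool" where
  "strongly_K_convex K \<Phi> \<mu> \<longleftrightarrow>
     (\<forall>x y. cle K (J \<Phi> x (y - x) + ((1/2) * (norm (y - x))\<^sup>2) *\<^sub>R \<mu>) (\<Phi> y - \<Phi> x))"

definition K_smooth :: "'b::euclidean_space set \<Rightarrow> ('a::euclidean_space \<Rightarrow> 'b) \<Rightarrow> 'b \<Rightarrow> bool" where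
  "K_smooth K \<Phi> l \<longleftrightarrow>
     (\<forall>x y. cle K (\<Phi> y - \<Phi> x) (J \<Phi> x (y - x) + ((1/2) * (norm (y - x))\<^sup>2) *\<^sub>R l))"

definition is_minimizer :: "('a \<Rightarrow> real) \<Rightarrow> 'a \<Rightarrow> bool" where
  "is_minimizer f z \<longleftrightarrow> (\<forall>w. f z \<le> f w)"

text \<open>Surrogate class S_{l,mu}(F, xk). The condition on x^{k+1} is imposed on
  the (unique, by strong convexity) minimizer of the scalarized surrogate.\<close>
definition surrogate ::
  "'b::euclidean_space set \<Rightarrow> 'b set \<Rightarrow> 'b \<Rightarrow> 'b \<Rightarrow> ('a::euclidean_space \<Rightarrow> 'b) \<Rightarrow> 'a
     \<Rightarrow> ('a \<Rightarrow> 'b) set" where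
  "surrogate K C l \<mu> F xk = {G.
     (\<forall>x. G differentiable at x) \<and> strongly_K_convex K G \<mu> \<and>
     (\<forall>z. is_minimizer (\<lambda>x. scal C (G x)) z \<longrightarrow> cle K (F z - F xk) (G z)) \<and>
     K_smooth K (\<lambda>x. G x - F x + F xk) l \<and>
     (G xk - F xk + F xk = 0) \<and>
     J (\<lambda>x. G x - F x + F xk) xk = (\<lambda>_. 0)}"

definition level_set :: "'b::euclidean_space set \<Rightarrow> ('a \<Rightarrow> 'b) \<Rightarrow> 'a \<Rightarrow> 'a set" where
  "level_set K F x0 = {x. cle K (F x) (F x0)}"

definition u0 :: "'b::euclidean_space set \<Rightarrow> ('a \<Rightarrow> 'b) \<Rightarrow> 'a \<Rightarrow> real" where
  "u0 C F x = (SUP z. INF c\<in>C. c \<bullet> (F x - F z))"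

end

theory Submission
  imports Defs
begin

lemma K_add:
  assumes K: "pointed_cone_ok K" and a: "a \<in> K" and b: "b \<in> K"
  shows "a + b \<in> K"
proof -
  have cv: "convex K" and cn: "cone K" using K unfolding pointed_cone_ok_def by auto
  have "(1/2) *\<^sub>R a + (1/2) *\<^sub>R b \<in> K"
    using convexD[OF cv a b, of "1/2" "1/2"] by simp
  then have "2 *\<^sub>R ((1/2) *\<^sub>R a + (1/2) *\<^sub>R b) \<in> K" using mem_cone[OF cn] by simp
  then show ?thesis by (simp add: scaleR_add_right)
qed

lemma K_scale:
  assumes K: "pointed_cone_ok K" and a: "a \<in> K" and "c \<ge> 0"
  shows "c *\<^sub>R a \<in> K"
  using K a assms(3) unfolding pointed_cone_ok_def by (auto intro: mem_cone)

lemma K_zero: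
  assumes K: "pointed_cone_ok K" shows "0 \<in> K"
proof -
  from K have "interior K \<noteq> {}" "cone K" unfolding pointed_cone_ok_def by auto
  then have "K \<noteq> {}" using interior_subset by blast
  then show ?thesis using cone_contains_0 \<open>cone K\<close> by blast
qed

lemma cle_trans:
  assumes K: "pointed_cone_ok K" and "cle K a b" "cle K b c" shows "cle K a c"
proof -
  have "(c - b) + (b - a) \<in> K" using K_add[OF K] assms(2,3) unfolding cle_def by blast
  then show ?thesis unfolding cle_def by simp
qed

lemma int_add:
  assumes K: "pointed_cone_ok K" and a: "a \<in> interior K" and b: "b \<in> K"
  shows "a + b \<in> interior K"
proof -
  obtain e where e: "e > 0" "ball a e \<subseteq> K" using a by (meson mem_interior)
  have "ball (a + b) e \<subseteq> K"
  proof
    fix y assume "y \<in> ball (a + b) e"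
    then have "y - b \<in> ball a e" by (simp add: dist_norm algebra_simps)
    then have "y - b \<in> K" using e by blast
    then have "(y - b) + b \<in> K" using K_add[OF K _ b] by blast
    then show "y \<in> K" by simp
  qed
  then show ?thesis using e by (meson mem_interior)
qed

lemma C_sub: "scal_set_ok K C \<Longrightarrow> C \<subseteq> dual_cone K"
  unfolding scal_set_ok_def by (metis hull_subset)

lemma C_ne: assumes "scal_set_ok K C" shows "C \<noteq> {}"
proof
  assume "C = {}"
  then have "dual_cone K = {}" using assms unfolding scal_set_ok_def
    by (simp add: hull_same)
  moreover have "0 \<in> dual_cone K" unfolding dual_cone_def by simp
  ultimately show False by simp
qed

lemma C_dual: "scal_set_ok K C \<Longrightarrow> c \<in> C \<Longrightarrow> v \<in> K \<Longrightarrow> 0 \<le> c \<bullet> v"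
  using C_sub unfolding dual_cone_def by blast

lemma bipolar:
  assumes K: "pointed_cone_ok K" and C: "scal_set_ok K C"
    and v: "\<forall>c\<in>C. 0 \<le> c \<bullet> v"
  shows "v \<in> K"
proof (rule ccontr)
  assume nv: "v \<notin> K"
  have cv: "convex K" "closed K" using K unfolding pointed_cone_ok_def by auto
  obtain a b where ab: "a \<bullet> v < b" "\<forall>x\<in>K. b < a \<bullet> x"
    using separating_hyperplane_closed_point[OF cv nv] by blast
  have b0: "b < 0" using ab(2) K_zero[OF K] by force
  have "a \<in> dual_cone K"
    unfolding dual_cone_def
  proof (clarify)
    fix y assume y: "y \<in> K"
    show "0 \<le> a \<bullet> y"
    proof (rule ccontr)
      assume "\<not> 0 \<le> a \<bullet> y"
      then have neg: "a \<bullet> y < 0" by simp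
      define s where "s = b / (a \<bullet> y)"
      have s0: "s \<ge> 0" unfolding s_def using neg b0 by (simp add: divide_nonpos_neg)
      have "s *\<^sub>R y \<in> K" using K_scale[OF K y s0] .
      then have "b < a \<bullet> (s *\<^sub>R y)" using ab(2) by blast
      also have "a \<bullet> (s *\<^sub>R y) = b" unfolding s_def using neg by simp
      finally show False by simp
    qed
  qed
  then have "a \<in> cone hull C" using C unfolding scal_set_ok_def by simp
  then obtain s c where sc: "a = s *\<^sub>R c" "s \<ge> 0" "c \<in> C" unfolding cone_hull_expl by blast
  have "0 \<le> s * (c \<bullet> v)" using sc v by simp
  then have "0 \<le> a \<bullet> v" using sc by simp
  then show False using ab(1) b0 by simp
qed

lemma C_pos:
  assumes K: "pointed_cone_ok K" and C: "scal_set_ok K C" and mu: "\<mu> \<in> interior K"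
    and c: "c \<in> C"
  shows "0 < c \<bullet> \<mu>"
proof -
  have c0: "c \<noteq> 0" using C c unfolding scal_set_ok_def by auto
  obtain e where e: "e > 0" "ball \<mu> e \<subseteq> K" using mu by (meson mem_interior)
  have "\<mu> - (e/2) *\<^sub>R (c /\<^sub>R norm c) \<in> ball \<mu> e" using e c0 by (simp add: dist_norm)
  then have "\<mu> - (e/2) *\<^sub>R (c /\<^sub>R norm c) \<in> K" using e by blast
  then have "0 \<le> c \<bullet> (\<mu> - (e/2) *\<^sub>R (c /\<^sub>R norm c))" using C_dual[OF C c] by blast
  also have "c \<bullet> (\<mu> - (e/2) *\<^sub>R (c /\<^sub>R norm c)) = c \<bullet> \<mu> - (e/2) * norm c"
    using c0 by (simp add: inner_diff_right power2_norm_eq_inner[symmetric] power2_eq_square)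
  finally have "(e/2) * norm c \<le> c \<bullet> \<mu>" by simp
  moreover have "0 < (e/2) * norm c" using e c0 by simp
  ultimately show ?thesis by linarith
qed

lemma C_bdd:
  assumes C: "scal_set_ok K C"
  shows "bdd_above ((\<lambda>c. c \<bullet> v) ` C)" "bdd_below ((\<lambda>c. c \<bullet> v) ` C)"
proof -
  have "compact ((\<lambda>c. c \<bullet> v) ` C)"
    using C unfolding scal_set_ok_def
    by (intro compact_continuous_image) (auto intro!: continuous_intros)
  then have "bounded ((\<lambda>c. c \<bullet> v) ` C)" by (rule compact_imp_bounded)
  then show "bdd_above ((\<lambda>c. c \<bullet> v) ` C)" "bdd_below ((\<lambda>c. c \<bullet> v) ` C)"
    by (auto intro: bounded_imp_bdd_above bounded_imp_bdd_below)
qed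

lemma C_max:
  assumes C: "scal_set_ok K C"
  shows "\<exists>c\<in>C. \<forall>d\<in>C. d \<bullet> v \<le> c \<bullet> v"
  using C C_ne[OF C] unfolding scal_set_ok_def
  by (intro continuous_attains_sup) (auto intro!: continuous_intros)

lemma scal_upper: "scal_set_ok K C \<Longrightarrow> c \<in> C \<Longrightarrow> c \<bullet> v \<le> scal C v"
  unfolding scal_def by (rule cSUP_upper) (auto intro: C_bdd)

lemma scal_least: "scal_set_ok K C \<Longrightarrow> (\<And>c. c \<in> C \<Longrightarrow> c \<bullet> v \<le> b) \<Longrightarrow> scal C v \<le> b"
  unfolding scal_def by (rule cSUP_least) (auto dest: C_ne)

lemma SC_comb:
  assumes K: "pointed_cone_ok K" and sc: "strongly_K_convex K G \<mu>"
    and dG: "\<forall>y. G differentiable at y" and t: "0 \<le> t" "t \<le> 1"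
  shows "(1 - t) *\<^sub>R G a + t *\<^sub>R G z - G (a + t *\<^sub>R (z - a))
          - ((1/2) * (t * (1 - t)) * (norm (z - a))\<^sup>2) *\<^sub>R \<mu> \<in> K"
proof -
  define w where "w = a + t *\<^sub>R (z - a)"
  define D where "D = J G w"
  have "(G has_derivative D) (at w)" unfolding D_def using dG frechet_derivative_works by blast
  then have lin: "linear D" by (rule has_derivative_linear)
  define d where "d = norm (z - a)"
  have aw: "a - w = (- t) *\<^sub>R (z - a)" unfolding w_def by (simp add: algebra_simps)
  have zw: "z - w = (1 - t) *\<^sub>R (z - a)" unfolding w_def by (simp add: algebra_simps)
  have naw: "norm (a - w) = t * d" unfolding aw d_def using t by simp
  have nzw: "norm (z - w) = (1 - t) * d" unfolding zw d_def using t by simp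
  have Daw: "D (a - w) = (- t) *\<^sub>R D (z - a)" unfolding aw using lin linear_scale[OF lin, of "- t"] by simp
  have Dzw: "D (z - w) = (1 - t) *\<^sub>R D (z - a)" unfolding zw using lin by (simp add: linear_scale)
  have P1: "G a - G w - (D (a - w) + ((1/2) * (norm (a - w))\<^sup>2) *\<^sub>R \<mu>) \<in> K"
    using sc unfolding strongly_K_convex_def cle_def D_def by blast
  have P2: "G z - G w - (D (z - w) + ((1/2) * (norm (z - w))\<^sup>2) *\<^sub>R \<mu>) \<in> K"
    using sc unfolding strongly_K_convex_def cle_def D_def by blast
  have S: "(1 - t) *\<^sub>R (G a - G w - (D (a - w) + ((1/2) * (norm (a - w))\<^sup>2) *\<^sub>R \<mu>))
     + t *\<^sub>R (G z - G w - (D (z - w) + ((1/2) * (norm (z - w))\<^sup>2) *\<^sub>R \<mu>)) \<in> K"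
    using K_add[OF K K_scale[OF K P1] K_scale[OF K P2]] t by simp
  have eq: "(1 - t) *\<^sub>R (G a - G w - (D (a - w) + ((1/2) * (norm (a - w))\<^sup>2) *\<^sub>R \<mu>))
     + t *\<^sub>R (G z - G w - (D (z - w) + ((1/2) * (norm (z - w))\<^sup>2) *\<^sub>R \<mu>))
     = (1 - t) *\<^sub>R G a + t *\<^sub>R G z - G w - ((1/2) * (t * (1 - t)) * d\<^sup>2) *\<^sub>R \<mu>"
  proof -
    have "(1 - t) *\<^sub>R (G a - G w - (D (a - w) + ((1/2) * (norm (a - w))\<^sup>2) *\<^sub>R \<mu>))
     + t *\<^sub>R (G z - G w - (D (z - w) + ((1/2) * (norm (z - w))\<^sup>2) *\<^sub>R \<mu>))
     = (1 - t) *\<^sub>R G a + t *\<^sub>R G z - G w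
       - ((1 - t) *\<^sub>R ((- t) *\<^sub>R D (z - a)) + t *\<^sub>R ((1 - t) *\<^sub>R D (z - a)))
       - ((1 - t) * ((1/2) * (t * d)\<^sup>2) + t * ((1/2) * ((1 - t) * d)\<^sup>2)) *\<^sub>R \<mu>"
      unfolding Daw Dzw naw nzw by (simp add: algebra_simps)
    also have "(1 - t) *\<^sub>R ((- t) *\<^sub>R D (z - a)) + t *\<^sub>R ((1 - t) *\<^sub>R D (z - a)) = 0"
      by (simp add: algebra_simps)
    also have "(1 - t) * ((1/2) * (t * d)\<^sup>2) + t * ((1/2) * ((1 - t) * d)\<^sup>2)
        = (1/2) * (t * (1 - t)) * d\<^sup>2"
      by (simp add: power2_eq_square field_simps)
    finally show ?thesis by simp
  qed
  show ?thesis using S unfolding eq by (simp add: w_def d_def)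
qed

lemma key_step:
  assumes K: "pointed_cone_ok K" and C: "scal_set_ok K C"
    and Gs: "G \<in> surrogate K C l \<mu> F xk"
    and mn: "is_minimizer (\<lambda>z. scal C (G z)) xn"
    and t: "0 < t" "t < 1"
  shows "\<exists>c\<in>C. c \<bullet> (F xn - F z) \<le> (1/2) * (c \<bullet> l) * (norm (z - xk))\<^sup>2
            - (1/2) * (1 - t) * (c \<bullet> \<mu>) * (norm (z - xn))\<^sup>2"
proof -
  have dG: "\<forall>y. G differentiable at y" and sc: "strongly_K_convex K G \<mu>"
    and third: "cle K (F xn - F xk) (G xn)"
    and sm: "K_smooth K (\<lambda>x. G x - F x + F xk) l"
    and H0: "G xk - F xk + F xk = 0"
    and JH: "J (\<lambda>x. G x - F x + F xk) xk = (\<lambda>_. 0)"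
    using Gs mn unfolding surrogate_def by auto
  define d where "d = norm (z - xn)"
  define V where "V = (1 - t) *\<^sub>R G xn + t *\<^sub>R G z - ((1/2) * (t * (1 - t)) * d\<^sup>2) *\<^sub>R \<mu>"
  define w where "w = xn + t *\<^sub>R (z - xn)"
  have VK: "V - G w \<in> K" using SC_comb[OF K sc dG, of t xn z] t unfolding V_def w_def d_def
    by (simp add: algebra_simps)
  obtain c where c: "c \<in> C" "\<forall>e\<in>C. e \<bullet> V \<le> c \<bullet> V" using C_max[OF C, of V] by blast
  have "scal C (G w) \<le> c \<bullet> V"
  proof (rule scal_least[OF C])
    fix e assume e: "e \<in> C"
    have "0 \<le> e \<bullet> (V - G w)" using C_dual[OF C e VK] .
    then have "e \<bullet> G w \<le> e \<bullet> V" by (simp add: inner_diff_right)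
    then show "e \<bullet> G w \<le> c \<bullet> V" using c e by force
  qed
  moreover have "scal C (G xn) \<le> scal C (G w)" using mn unfolding is_minimizer_def by blast
  moreover have cx: "c \<bullet> G xn \<le> scal C (G xn)" using scal_upper[OF C c(1)] .
  ultimately have A: "scal C (G xn) \<le> (1 - t) * (c \<bullet> G xn) + t * (c \<bullet> G z)
       - (1/2) * (t * (1 - t)) * d\<^sup>2 * (c \<bullet> \<mu>)"
    unfolding V_def by (simp add: inner_diff_right inner_add_right)
  have "(1 - t) * (c \<bullet> G xn) \<le> (1 - t) * scal C (G xn)" using cx t by simp
  with A have "t * scal C (G xn) \<le> t * ((c \<bullet> G z) - (1/2) * (1 - t) * d\<^sup>2 * (c \<bullet> \<mu>))"
    by (simp add: algebra_simps)
  then have B: "scal C (G xn) \<le> (c \<bullet> G z) - (1/2) * (1 - t) * d\<^sup>2 * (c \<bullet> \<mu>)"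
    using t by simp
  have "cle K ((G z - F z + F xk) - (G xk - F xk + F xk))
        (J (\<lambda>x. G x - F x + F xk) xk (z - xk) + ((1/2) * (norm (z - xk))\<^sup>2) *\<^sub>R l)"
    using sm unfolding K_smooth_def by blast
  then have "((1/2) * (norm (z - xk))\<^sup>2) *\<^sub>R l - (G z - F z + F xk) \<in> K"
    unfolding JH H0 cle_def by simp
  then have "0 \<le> c \<bullet> (((1/2) * (norm (z - xk))\<^sup>2) *\<^sub>R l - (G z - F z + F xk))"
    using C_dual[OF C c(1)] by blast
  then have E: "c \<bullet> G z \<le> c \<bullet> F z - c \<bullet> F xk + (1/2) * (norm (z - xk))\<^sup>2 * (c \<bullet> l)"
    by (simp add: inner_diff_right inner_add_right)
  have "0 \<le> c \<bullet> (G xn - (F xn - F xk))" using C_dual[OF C c(1)] third unfolding cle_def by blast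
  then have Fx: "c \<bullet> F xn - c \<bullet> F xk \<le> c \<bullet> G xn" by (simp add: inner_diff_right)
  have e1: "(1/2) * (1 - t) * d\<^sup>2 * (c \<bullet> \<mu>) = (1/2) * (1 - t) * (c \<bullet> \<mu>) * d\<^sup>2" by simp
  have e2: "(1/2) * (norm (z - xk))\<^sup>2 * (c \<bullet> l) = (1/2) * (c \<bullet> l) * (norm (z - xk))\<^sup>2" by simp
  have "c \<bullet> (F xn - F z) \<le> (1/2) * (c \<bullet> l) * (norm (z - xk))\<^sup>2
            - (1/2) * (1 - t) * (c \<bullet> \<mu>) * d\<^sup>2"
    using B E Fx cx e1 e2 unfolding inner_diff_right by linarith
  then show ?thesis
    using c(1) unfolding d_def by blast
qed

lemma real_lim_t:
  fixes A B Q :: real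
  assumes h: "\<And>t. 0 < t \<Longrightarrow> t < 1 \<Longrightarrow> A \<le> B + t * Q" and Q: "Q \<ge> 0"
  shows "A \<le> B"
proof (rule ccontr)
  assume "\<not> A \<le> B"
  then have AB: "A > B" by simp
  show False
  proof (cases "Q = 0")
    case True then show ?thesis using h[of "1/2"] AB by simp
  next
    case False
    then have Qp: "Q > 0" using Q by simp
    define t where "t = min (1/2) ((A - B) / (2 * Q))"
    have t0: "0 < t" unfolding t_def using AB Qp by simp
    have t1: "t < 1" unfolding t_def by simp
    have "t * Q \<le> ((A - B) / (2 * Q)) * Q" unfolding t_def using Qp
      by (intro mult_right_mono) auto
    also have "\<dots> = (A - B) / 2" using Qp by simp
    finally have "t * Q < A - B" using AB by simp
    then show False using h[OF t0 t1] by simp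
  qed
qed

lemma fejer_step:
  assumes K: "pointed_cone_ok K" and C: "scal_set_ok K C"
    and Gs: "G \<in> surrogate K C l \<mu> F xk"
    and mn: "is_minimizer (\<lambda>z. scal C (G z)) xn"
    and mu: "\<mu> \<in> interior K" and lmu: "cle K l \<mu>"
    and z: "cle K (F z) (F xn)"
  shows "(norm (z - xn))\<^sup>2 \<le> (norm (z - xk))\<^sup>2"
proof -
  have H: "(1 - t) * (norm (z - xn))\<^sup>2 \<le> (norm (z - xk))\<^sup>2" if t: "0 < t" "t < 1" for t
  proof -
    obtain c where c: "c \<in> C" and ineq: "c \<bullet> (F xn - F z) \<le> (1/2) * (c \<bullet> l) * (norm (z - xk))\<^sup>2
            - (1/2) * (1 - t) * (c \<bullet> \<mu>) * (norm (z - xn))\<^sup>2"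
      using key_step[OF K C Gs mn t] by blast
    have "0 \<le> c \<bullet> (F xn - F z)" using C_dual[OF C c] z unfolding cle_def by blast
    moreover have "c \<bullet> l \<le> c \<bullet> \<mu>"
    proof -
      have "0 \<le> c \<bullet> (\<mu> - l)" using C_dual[OF C c] lmu unfolding cle_def by blast
      then show ?thesis by (simp add: inner_diff_right)
    qed
    moreover have mp: "0 < c \<bullet> \<mu>" using C_pos[OF K C mu c] .
    ultimately have "(1/2) * (1 - t) * (c \<bullet> \<mu>) * (norm (z - xn))\<^sup>2 \<le> (1/2) * (c \<bullet> \<mu>) * (norm (z - xk))\<^sup>2"
    proof -
      have hh: "(c \<bullet> l) * (norm (z - xk))\<^sup>2 \<le> (c \<bullet> \<mu>) * (norm (z - xk))\<^sup>2"
        by (rule mult_right_mono) (use \<open>c \<bullet> l \<le> c \<bullet> \<mu>\<close> in simp_all)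
      show ?thesis using ineq hh \<open>0 \<le> c \<bullet> (F xn - F z)\<close> by linarith
    qed
    then have "(c \<bullet> \<mu>) * ((1 - t) * (norm (z - xn))\<^sup>2) \<le> (c \<bullet> \<mu>) * (norm (z - xk))\<^sup>2"
      by (simp add: mult.commute mult.left_commute)
    then show "(1 - t) * (norm (z - xn))\<^sup>2 \<le> (norm (z - xk))\<^sup>2"
      using mp by (rule mult_left_le_imp_le)
  qed
  have HH: "(norm (z - xn))\<^sup>2 \<le> (norm (z - xk))\<^sup>2 + t * (norm (z - xn))\<^sup>2" if t: "0 < t" "t < 1" for t
    using H[OF t] by (simp add: algebra_simps)
  have Q0: "0 \<le> (norm (z - xn))\<^sup>2" by simp
  show ?thesis using real_lim_t[OF HH Q0] .
qed

lemma rate_step: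
  assumes K: "pointed_cone_ok K" and C: "scal_set_ok K C"
    and Gs: "G \<in> surrogate K C l \<mu> F xk"
    and mn: "is_minimizer (\<lambda>z. scal C (G z)) xn"
    and mu: "\<mu> \<in> interior K" and lmu: "cle K l \<mu>" and l: "l \<in> K"
    and z: "cle K (F z) (F xn)"
    and m: "\<forall>c\<in>C. m \<le> c \<bullet> (F xn - F z)"
  shows "m \<le> (1/2) * scal C l * ((norm (z - xk))\<^sup>2 - (norm (z - xn))\<^sup>2)"
proof -
  define a where "a = (norm (z - xk))\<^sup>2"
  define b where "b = (norm (z - xn))\<^sup>2"
  define L where "L = scal C l"
  have ba: "b \<le> a" unfolding a_def b_def using fejer_step[OF K C Gs mn mu lmu z] .
  have b0: "0 \<le> b" unfolding b_def by simp
  obtain c0 where c0: "c0 \<in> C" using C_ne[OF C] by blast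
  have L0: "0 \<le> L" unfolding L_def using C_dual[OF C c0 l] scal_upper[OF C c0, of l] by linarith
  have "m \<le> (1/2) * L * (a - b) + t * ((1/2) * L * b)" if t: "0 < t" "t < 1" for t
  proof -
    obtain c where c: "c \<in> C" and ineq: "c \<bullet> (F xn - F z) \<le> (1/2) * (c \<bullet> l) * a
            - (1/2) * (1 - t) * (c \<bullet> \<mu>) * b"
      using key_step[OF K C Gs mn t] unfolding a_def b_def by blast
    have lm: "c \<bullet> l \<le> c \<bullet> \<mu>"
    proof -
      have "0 \<le> c \<bullet> (\<mu> - l)" using C_dual[OF C c] lmu unfolding cle_def by blast
      then show ?thesis by (simp add: inner_diff_right)
    qed
    have cl0: "0 \<le> c \<bullet> l" using C_dual[OF C c l] .
    have clL: "c \<bullet> l \<le> L" unfolding L_def using scal_upper[OF C c] .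
    have tb: "0 \<le> (1 - t) * b" using t b0 by simp
    have "(1 - t) * b * (c \<bullet> l) \<le> (1 - t) * b * (c \<bullet> \<mu>)" using mult_left_mono[OF lm tb] .
    moreover have "(1/2) * (c \<bullet> l) * (a - (1 - t) * b) = (1/2) * (c \<bullet> l) * a - (1/2) * ((1 - t) * b * (c \<bullet> l))"
      by (simp add: field_simps)
    moreover have "(1/2) * (1 - t) * (c \<bullet> \<mu>) * b = (1/2) * ((1 - t) * b * (c \<bullet> \<mu>))" by simp
    ultimately have i1: "c \<bullet> (F xn - F z) \<le> (1/2) * (c \<bullet> l) * (a - (1 - t) * b)"
      using ineq by linarith
    have pos: "0 \<le> a - (1 - t) * b"
    proof -
      have "a - (1 - t) * b = (a - b) + t * b" by (simp add: algebra_simps)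
      moreover have "0 \<le> t * b" using t b0 by simp
      ultimately show ?thesis using ba by linarith
    qed
    have "(c \<bullet> l) * (a - (1 - t) * b) \<le> L * (a - (1 - t) * b)" using mult_right_mono[OF clL pos] .
    then have "c \<bullet> (F xn - F z) \<le> (1/2) * L * (a - (1 - t) * b)" using i1 by simp
    also have "\<dots> = (1/2) * L * (a - b) + t * ((1/2) * L * b)" by (simp add: field_simps)
    finally show ?thesis using m c by force
  qed
  note HH = this
  have Q0: "0 \<le> (1/2) * L * b" using L0 b0 by simp
  have "m \<le> (1/2) * L * (a - b)" using real_lim_t[OF HH Q0] .
  then show ?thesis unfolding L_def a_def b_def .
qed

theorem theorem2:
  fixes K C :: "'b::euclidean_space set"
    and F :: "'a::euclidean_space \<Rightarrow> 'b"
    and l \<mu> :: 'b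
    and x :: "nat \<Rightarrow> 'a"
    and G :: "nat \<Rightarrow> 'a \<Rightarrow> 'b"
  assumes K: "pointed_cone_ok K"
    and C: "scal_set_ok K C"
    and F_diff: "\<forall>z. F differentiable at z"
    and F_conv: "K_convex K F"
    and l_in: "l \<in> K" and mu_in: "\<mu> \<in> interior K" and l_le_mu: "cle K l \<mu>"
    and A1: "bounded (level_set K F (x 0))"
    and A2: "\<And>r xs. strict_mono r \<Longrightarrow> (\<lambda>j. x (r j)) \<longlonglongrightarrow> xs \<Longrightarrow>
               (\<lambda>j. scal C (G (r j) (x (Suc (r j))))) \<longlonglongrightarrow> 0 \<Longrightarrow> K_stationary K F xs"
    and surr: "\<forall>k. G k \<in> surrogate K C l \<mu> F (x k)"
    and step: "\<forall>k. is_minimizer (\<lambda>z. scal C (G k z)) (x (Suc k))"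
    and nostop: "\<forall>k. x (Suc k) \<noteq> x k"
  shows "(\<exists>xs. x \<longlonglongrightarrow> xs \<and> weakly_efficient K F xs) \<and>
         (\<forall>k\<ge>1. u0 C F (x k) \<le>
            scal C l * (Sup {norm (y - z) | y z. y \<in> level_set K F (x 0) \<and> z \<in> level_set K F (x 0)})\<^sup>2
              / (2 * real k))"
proof -
  have Gs: "\<And>k. G k \<in> surrogate K C l \<mu> F (x k)" using surr by blast
  have mn: "\<And>k. is_minimizer (\<lambda>z. scal C (G k z)) (x (Suc k))" using step by blast
  have Cne: "C \<noteq> {}" using C_ne[OF C] .
  obtain c0 where c0: "c0 \<in> C" using Cne by blast
  define L0 where "L0 = level_set K F (x 0)"
  have cle_refl: "\<And>a. cle K a a" unfolding cle_def using K_zero[OF K] by simp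
  have Gle0: "- G k (x (Suc k)) \<in> K" for k
  proof -
    have "G k (x k) - F (x k) + F (x k) = 0" using Gs[of k] unfolding surrogate_def by blast
    then have Gxk: "G k (x k) = 0" by simp
    have "scal C (G k (x (Suc k))) \<le> scal C (G k (x k))" using mn[of k] unfolding is_minimizer_def by blast
    also have "scal C (G k (x k)) = 0" unfolding Gxk scal_def using Cne by simp
    finally have sc0: "scal C (G k (x (Suc k))) \<le> 0" .
    show ?thesis
    proof (rule bipolar[OF K C], intro ballI)
      fix c assume c: "c \<in> C"
      have "c \<bullet> G k (x (Suc k)) \<le> 0" using scal_upper[OF C c] sc0 by (meson order_trans)
      then show "0 \<le> c \<bullet> - G k (x (Suc k))" by simp
    qed
  qed
  have third: "cle K (F (x (Suc k)) - F (x k)) (G k (x (Suc k)))" for k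
    using Gs[of k] mn[of k] unfolding surrogate_def by blast
  have desc: "cle K (F (x (Suc k))) (F (x k))" for k
  proof -
    have "(G k (x (Suc k)) - (F (x (Suc k)) - F (x k))) + (- G k (x (Suc k))) \<in> K"
      using K_add[OF K] third[of k] Gle0[of k] unfolding cle_def by blast
    then show ?thesis unfolding cle_def by simp
  qed
  have mono: "cle K (F (x j)) (F (x i))" if "i \<le> j" for i j
  proof -
    have "cle K (F (x (i + d))) (F (x i))" for d
    proof (induction d)
      case 0 then show ?case using cle_refl by simp
    next
      case (Suc d) then show ?case using cle_trans[OF K desc[of "i + d"]] by simp
    qed
    then show ?thesis using that by (metis le_add_diff_inverse)
  qed
  have inL0: "x k \<in> L0" for k using mono[of 0 k] unfolding L0_def level_set_def by simp
  have contF: "isCont F z" for z using F_diff differentiable_imp_continuous_within by blast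
  have partI: "\<exists>xs. x \<longlonglongrightarrow> xs \<and> weakly_efficient K F xs"
  proof -
    have "range x \<subseteq> level_set K F (x 0)" using inL0 unfolding L0_def by blast
    then have "bounded (range x)" using bounded_subset[OF A1] by blast
    then obtain xs r where r: "strict_mono r" and xr: "(x \<circ> r) \<longlonglongrightarrow> xs"
      using bounded_imp_convergent_subsequence by blast
    have xr': "(\<lambda>j. x (r j)) \<longlonglongrightarrow> xs" using xr by (simp add: comp_def)
    have Om: "cle K (F xs) (F (x k))" for k
    proof -
      have closedK: "closed K" using K unfolding pointed_cone_ok_def by simp
      have "((\<lambda>j. F (x k) - F (x (r j))) \<longlongrightarrow> F (x k) - F xs) sequentially"
        by (intro tendsto_diff tendsto_const isCont_tendsto_compose[OF contF xr'])
      moreover have ev: "eventually (\<lambda>j. F (x k) - F (x (r j)) \<in> K) sequentially"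
      proof (rule eventually_sequentiallyI[of k])
        fix j assume "k \<le> j"
        then have "k \<le> r j" using seq_suble[OF r, of j] by simp
        then show "F (x k) - F (x (r j)) \<in> K" using mono unfolding cle_def by blast
      qed
      ultimately have "F (x k) - F xs \<in> K"
        using Lim_in_closed_set[OF closedK ev] by simp
      then show ?thesis unfolding cle_def .
    qed
    define b where "b k = norm (x k - xs)" for k
    have bdec: "b (Suc k) \<le> b k" for k
    proof -
      have "(norm (xs - x (Suc k)))\<^sup>2 \<le> (norm (xs - x k))\<^sup>2"
        using fejer_step[OF K C Gs[of k] mn[of k] mu_in l_le_mu Om[of "Suc k"]] .
      then have "norm (xs - x (Suc k)) \<le> norm (xs - x k)"
        by (rule power2_le_imp_le) simp
      then show ?thesis unfolding b_def
        using norm_minus_commute[of "x (Suc k)" xs] norm_minus_commute[of "x k" xs] by linarith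
    qed
    have bdec2: "b j \<le> b i" if "i \<le> j" for i j
      using decseqD[OF decseq_SucI[of b, OF bdec] that] .
    have conv: "x \<longlonglongrightarrow> xs"
    proof (rule LIMSEQ_I)
      fix e :: real assume e: "0 < e"
      obtain N where N: "\<forall>n\<ge>N. norm (x (r n) - xs) < e" using LIMSEQ_D[OF xr' e] by blast
      have "\<forall>n\<ge>r N. norm (x n - xs) < e"
      proof (intro allI impI)
        fix n assume "r N \<le> n"
        then have "b n \<le> b (r N)" by (rule bdec2)
        moreover have "norm (x (r N) - xs) < e" using N by simp
        ultimately show "norm (x n - xs) < e" unfolding b_def by linarith
      qed
      then show "\<exists>no. \<forall>n\<ge>no. norm (x n - xs) < e" by blast
    qed
    have sc_to0: "(\<lambda>j. scal C (G (id j) (x (Suc (id j))))) \<longlonglongrightarrow> 0"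
    proof (rule tendsto_sandwich[of "\<lambda>k. c0 \<bullet> (F (x (Suc k)) - F (x k))" _ _ "\<lambda>_. 0"])
      show "eventually (\<lambda>k. c0 \<bullet> (F (x (Suc k)) - F (x k)) \<le> scal C (G (id k) (x (Suc (id k))))) sequentially"
      proof (rule always_eventually, intro allI)
        fix k
        have "0 \<le> c0 \<bullet> (G k (x (Suc k)) - (F (x (Suc k)) - F (x k)))"
          using C_dual[OF C c0] third[of k] unfolding cle_def by blast
        then have "c0 \<bullet> (F (x (Suc k)) - F (x k)) \<le> c0 \<bullet> G k (x (Suc k))"
          by (simp add: inner_diff_right)
        also have "\<dots> \<le> scal C (G k (x (Suc k)))" using scal_upper[OF C c0] .
        finally show "c0 \<bullet> (F (x (Suc k)) - F (x k)) \<le> scal C (G (id k) (x (Suc (id k))))" by simp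
      qed
      show "eventually (\<lambda>k. scal C (G (id k) (x (Suc (id k)))) \<le> 0) sequentially"
      proof (rule always_eventually, intro allI)
        fix k
        show "scal C (G (id k) (x (Suc (id k)))) \<le> 0"
        proof (simp, rule scal_least[OF C])
          fix c assume c: "c \<in> C"
          have "0 \<le> c \<bullet> (- G k (x (Suc k)))" using C_dual[OF C c Gle0[of k]] .
          then show "c \<bullet> G k (x (Suc k)) \<le> 0" by simp
        qed
      qed
      have "(\<lambda>k. F (x (Suc k))) \<longlonglongrightarrow> F xs"
        using isCont_tendsto_compose[OF contF LIMSEQ_Suc[OF conv]] .
      moreover have "(\<lambda>k. F (x k)) \<longlonglongrightarrow> F xs" using isCont_tendsto_compose[OF contF conv] .
      ultimately have "(\<lambda>k. c0 \<bullet> (F (x (Suc k)) - F (x k))) \<longlonglongrightarrow> c0 \<bullet> (F xs - F xs)"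
        by (intro tendsto_inner tendsto_const tendsto_diff)
      then show "(\<lambda>k. c0 \<bullet> (F (x (Suc k)) - F (x k))) \<longlonglongrightarrow> 0" by simp
      show "(\<lambda>_. 0::real) \<longlonglongrightarrow> 0" by simp
    qed
    have "(\<lambda>j. x (id j)) \<longlonglongrightarrow> xs" using conv by simp
    then have stat: "K_stationary K F xs" using A2[OF strict_mono_id _ sc_to0] by blast
    have "weakly_efficient K F xs"
      unfolding weakly_efficient_def
    proof
      assume "\<exists>y. clt K (F y) (F xs)"
      then obtain y where y: "F xs - F y \<in> interior K" unfolding clt_def by blast
      have "F y - F xs - J F xs (y - xs) \<in> K" using F_conv unfolding K_convex_def cle_def by blast
      then have "(F xs - F y) + (F y - F xs - J F xs (y - xs)) \<in> interior K"
        using int_add[OF K y] by blast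
      then have "- J F xs (y - xs) \<in> interior K" by simp
      then have "J F xs (y - xs) \<in> uminus ` interior K"
        by (intro image_eqI[where x="- J F xs (y - xs)"]) simp_all
      moreover have "J F xs (y - xs) \<in> range (J F xs)" by simp
      ultimately show False using stat unfolding K_stationary_def by blast
    qed
    then show ?thesis using conv by blast
  qed
  define S where "S = {norm (y - z) | y z. y \<in> L0 \<and> z \<in> L0}"
  define R where "R = Sup S"
  define Lm where "Lm = scal C l"
  have Lm0: "0 \<le> Lm" unfolding Lm_def using C_dual[OF C c0 l_in] scal_upper[OF C c0, of l] by linarith
  have bddS: "bdd_above S"
  proof -
    obtain B where B: "\<forall>y\<in>L0. norm y \<le> B" using A1 unfolding L0_def bounded_iff by blast
    have "\<forall>s\<in>S. s \<le> 2 * B"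
    proof
      fix s assume "s \<in> S"
      then obtain y z where "s = norm (y - z)" "y \<in> L0" "z \<in> L0" unfolding S_def by blast
      moreover have "norm y \<le> B" "norm z \<le> B" using B \<open>y \<in> L0\<close> \<open>z \<in> L0\<close> by auto
      ultimately show "s \<le> 2 * B" using norm_triangle_ineq4[of y z] by linarith
    qed
    then show ?thesis unfolding bdd_above_def by blast
  qed
  have partII: "u0 C F (x k) \<le> Lm * R\<^sup>2 / (2 * real k)" if k1: "k \<ge> 1" for k
    unfolding u0_def
  proof (rule cSUP_least)
    show "UNIV \<noteq> {}" by simp
    fix z
    define m where "m = (INF c\<in>C. c \<bullet> (F (x k) - F z))"
    have kpos: "0 < real k" using k1 by simp
    have bnd0: "0 \<le> Lm * R\<^sup>2 / (2 * real k)" using Lm0 kpos by simp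
    show "(INF c\<in>C. c \<bullet> (F (x k) - F z)) \<le> Lm * R\<^sup>2 / (2 * real k)"
    proof (cases "m \<le> 0")
      case True then show ?thesis using bnd0 unfolding m_def by linarith
    next
      case False
      then have mpos: "0 < m" by simp
      have mc: "\<forall>c\<in>C. m \<le> c \<bullet> (F (x k) - F z)"
        unfolding m_def using C_bdd(2)[OF C, of "F (x k) - F z"] by (auto intro: cINF_lower)
      have zk: "cle K (F z) (F (x k))" unfolding cle_def
        by (rule bipolar[OF K C]) (use mc mpos in force)
      define a where "a i = (norm (z - x i))\<^sup>2" for i
      have stepi: "m \<le> (1/2) * Lm * (a i - a (Suc i))" if ik: "i < k" for i
      proof -
        have zi: "cle K (F z) (F (x (Suc i)))" using cle_trans[OF K zk mono[of "Suc i" k]] ik by simp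
        have mi: "\<forall>c\<in>C. m \<le> c \<bullet> (F (x (Suc i)) - F z)"
        proof
          fix c assume c: "c \<in> C"
          have "0 \<le> c \<bullet> (F (x (Suc i)) - F (x k))"
            using C_dual[OF C c] mono[of "Suc i" k] ik unfolding cle_def by simp
          moreover have "F (x (Suc i)) - F z = (F (x (Suc i)) - F (x k)) + (F (x k) - F z)" by simp
          ultimately show "m \<le> c \<bullet> (F (x (Suc i)) - F z)"
            using mc c by (simp only: inner_add_right) force
        qed
        show ?thesis using rate_step[OF K C Gs[of i] mn[of i] mu_in l_le_mu l_in zi mi]
          unfolding a_def Lm_def .
      qed
      have tel: "real j * m \<le> (1/2) * Lm * (a 0 - a j)" if "j \<le> k" for j
        using that
      proof (induction j)
        case 0 then show ?case by simp
      next
        case (Suc j)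
        then have "real j * m \<le> (1/2) * Lm * (a 0 - a j)" by simp
        moreover have "m \<le> (1/2) * Lm * (a j - a (Suc j))" using stepi Suc.prems by simp
        ultimately show ?case by (simp add: algebra_simps)
      qed
      have "real k * m \<le> (1/2) * Lm * (a 0 - a k)" using tel by simp
      also have "\<dots> \<le> (1/2) * Lm * a 0" using Lm0 unfolding a_def by (simp add: mult_left_mono)
      also have "\<dots> \<le> (1/2) * Lm * R\<^sup>2"
      proof -
        have zL: "z \<in> L0" using cle_trans[OF K zk mono[of 0 k]] unfolding L0_def level_set_def by simp
        have "norm (z - x 0) \<in> S" unfolding S_def using zL inL0[of 0] by blast
        then have "norm (z - x 0) \<le> R" unfolding R_def using bddS by (rule cSup_upper)
        then have "a 0 \<le> R\<^sup>2" unfolding a_def by (simp add: power_mono)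
        then show ?thesis using Lm0 by (simp add: mult_left_mono)
      qed
      finally have "real k * m \<le> (1/2) * Lm * R\<^sup>2" .
      then have "m \<le> Lm * R\<^sup>2 / (2 * real k)" using kpos by (simp add: field_simps)
      then show ?thesis unfolding m_def .
    qed
  qed
  show ?thesis using partI partII unfolding L0_def S_def R_def Lm_def by blast
qed

end
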